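(* Let $m$ be an odd integer with $m\geq 7$, and let $p'$ be the smallest odd prime not dividing $m$. Then $p' < 0.6\cdot m$. *)

theory Defs
  imports Complex_Main "HOL-Computational_Algebra.Primes"
begin

end

theory Submission
  imports Defs
begin

lemma int_least_le:
  fixes P :: "int \<Rightarrow> bool"
  assumes "P x" and nn: "\<And>p. P p \<Longrightarrow> p \<ge> 0"
  shows "(LEAST p::int. P p) \<le> x"
proof -
  define n0 where "n0 = (LEAST n::nat. P (int n))"
  have x0: "x \<ge> 0" using nn assms(1) by blast
  have Px: "P (int (nat x))" using x0 assms(1) by simp
  have P0: "P (int n0)" unfolding n0_def using Px by (rule LeastI)
  have min: "int n0 \<le> y" if "P y" for y
  proof -
    have "y \<ge> 0" using nn that by blast
    then have "P (int (nat y))" using that by simp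
    then have "n0 \<le> nat y" unfolding n0_def by (rule Least_le)
    then show ?thesis using \<open>y \<ge> 0\<close> by linarith
  qed
  have "(LEAST p::int. P p) = int n0"
    by (rule Least_equality) (use P0 min in auto)
  then show ?thesis using min[OF assms(1)] by simp
qed

theorem mainTheorem3:
  fixes m :: int
  assumes "odd m" and "m \<ge> 7"
  shows "real_of_int (LEAST p::int. prime p \<and> odd p \<and> \<not> p dvd m) < 0.6 * real_of_int m"
proof -
  let ?P = "\<lambda>p::int. prime p \<and> odd p \<and> \<not> p dvd m"
  have nn: "\<And>p. ?P p \<Longrightarrow> p \<ge> 0" by (auto dest: prime_gt_0_int)
  show ?thesis
  proof (cases "3 dvd m")
    case False
    have "?P 3" using False by auto
    then have "(LEAST p. ?P p) \<le> 3" by (rule int_least_le[OF _ nn])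
    then show ?thesis using assms(2) by linarith
  next
    case True
    then obtain k where k: "m = 3 * k" by blast
    have kodd: "odd k" using assms(1) k by auto
    have k3: "k \<ge> 3" using assms k kodd by presburger
    define N where "N = (if k mod 3 = 1 then k - 2 else k + 2)"
    have N3: "\<not> 3 dvd N" unfolding N_def by presburger
    have Nodd: "odd N" unfolding N_def using kodd by auto
    have N1: "N > 1" unfolding N_def using k3 by presburger
    have Nle: "N \<le> k + 2" unfolding N_def by auto
    obtain r where r: "prime r" "r dvd N"
      using prime_divisor_exists[of N] N1 by auto
    have rodd: "odd r" using r Nodd using dvd_trans by blast
    have rndvd: "\<not> r dvd m"
    proof
      assume "r dvd m"
      show False
      proof (cases "r = 3")
        case True thus False using r N3 by simp
      next
        case False
        have "coprime r 3"
          using False r(1) using primes_coprime[of r 3] by simp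
        then have "r dvd k" using \<open>r dvd m\<close> k by (metis coprime_dvd_mult_right_iff)
        then have "r dvd 2"
        proof (cases "k mod 3 = 1")
          case True
          then have "r dvd k - 2" using r(2) unfolding N_def by simp
          then have "r dvd k - (k - 2)" using \<open>r dvd k\<close> by (rule dvd_diff[rotated])
          then show ?thesis by simp
        next
          case False
          then have "r dvd k + 2" using r(2) unfolding N_def by simp
          then have "r dvd (k + 2) - k" using \<open>r dvd k\<close> by (rule dvd_diff)
          then show ?thesis by simp
        qed
        then have "r \<le> 2" by (simp add: zdvd_imp_le)
        moreover have "r \<ge> 2" using r(1) prime_ge_2_int by blast
        ultimately have "r = 2" by simp
        then show False using rodd by simp
      qed
    qed
    have "r \<le> N" using r N1 by (simp add: zdvd_imp_le)
    have "(LEAST p. ?P p) \<le> r" by (rule int_least_le[OF _ nn]) (use r rodd rndvd in auto)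
    then show ?thesis using \<open>r \<le> N\<close> Nle k k3 by linarith
  qed
qed

end
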